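(* Assume $\langle f\rangle_X=0$ and that $\psi$ satisfies (A1) and (A2); let $u^H$ be the solution of the HQC problem, $u^{H,c}$ its reconstruction, and $\hat u^{H,c}(X_i)=u^H(X_i)+\epsilon\chi(X_i,X_i/\epsilon)Du^H(X_i)$. Then there exist constants $C_{13},C_{14}$, depending only on $c_\psi,C_\psi,C'_\psi$ and $p$ (independent of $\epsilon$, $H$, $f$), such that \[ |\hat u^{H,c}-u^{H,c}|_{H^1}\le C_{13}H|f|_{H^{-1}},\qquad \|\hat u^{H,c}-u^{H,c}\|_{L^2}\le C_{14}\,\epsilon H|f|_{H^{-1}}. \]
   Context: Let $\epsilon>0$, $N,p$ positive integers with $N/p\in\mathbb N$ and normalization $N\epsilon=1$; $X_i=\epsilon i$, $Y_j=j$. $U^N_{\rm per}(\epsilon\mathbb Z)$: functions $u:\epsilon\mathbb Z\to\mathbb R$ with $u(X_{i+N})=u(X_i)$; $U^N_\#(\epsilon\mathbb Z)$: those with $\langle u\rangle_X:=\frac1N\sum_{i=1}^Nu(X_i)=0$. $\langle u,v\rangle_X=\frac1N\sum_{i=1}^Nu(X_i)v(X_i)$, $Du(X_i)=(u(X_{i+1})-u(X_i))/\epsilon$, $\|u\|_{L^2}=\langle u,u\rangle_X^{1/2}$, $|u|_{H^1}=\|Du\|_{L^2}$, $|u|_{H^{-1}}=\sup\{\langle u,w\rangle_X/|w|_{H^1}:0\ne w\in U^N_\#(\epsilon\mathbb Z)\}$. $U^p_\#(\epsilon\mathbb Z)$: $p$-periodic functions on $\epsilon\mathbb Z$ with $\sum_{i=1}^pw(X_i)=0$.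 Two-scale functions $g:\epsilon\mathbb Z\times\mathbb Z\to\mathbb R$ satisfy $g(X_{i+N},Y_j)=g(X_i,Y_j)=g(X_i,Y_{j+p})$; $D_Xg(X_i,Y_j)=(g(X_{i+1},Y_j)-g(X_i,Y_j))/\epsilon$, $D_Yg(X_i,Y_j)=g(X_i,Y_{j+1})-g(X_i,Y_j)$, $\|g\|_{L^\infty(N,p)}=\max_{1\le i\le N,1\le j\le p}|g|$. $\psi$ is a two-scale function with (A1) $0<c_\psi\le\psi\le C_\psi$ and (A2) $\|D_X\psi\|_{L^\infty(N,p)}\le C'_\psi$. Cell solution $\chi$: two-scale with $\frac1p\sum_{j=1}^p\chi(X_i,Y_j)=0$ and $-D_Y(\psi D_Y\chi)=D_Y\psi$ everywhere. $f\in U^N_{\rm per}(\epsilon\mathbb Z)$. HQC method: indices $1=i_1<\dots<i_K\le N$, $i_{K+1}=N+1$, $S_k=\{X_i:i_k\le i<i_{k+1}\}$, $H_k=\epsilon(i_{k+1}-i_k)$, $H=\max_kH_k$. $U^H_{\rm per}$: $v\in U^N_{\rm per}(\epsilon\mathbb Z)$ affine on each $\{X_i:i_k\le i\le i_{k+1}\}$; $U^H_\#=U^H_{\rm per}\cap U^N_\#(\epsilon\mathbb Z)$. Sampling domains $S_k^{\rm rep}=\{X_i:i_k^{\rm rep}\le i<i_k^{\rm rep}+p\}\subset S_k$, collocation indices with $X_{i_k^{\rm coll}}\in S_k^{\rm rep}$, $\psi^\epsilon_{{\rm coll},k}(X_i)=\psi(X_{i_k^{\rm coll}},X_i/\epsilon)$,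 $\langle a,b\rangle_{S_k^{\rm rep}}=\frac1p\sum_{X_i\in S_k^{\rm rep}}a(X_i)b(X_i)$. For $v^H\in U^H_{\rm per}$ let $\ell_k$ be the affine function on $\epsilon\mathbb Z$ equal to $v^H$ on $S_k$; $\mathcal R_k(v^H)=\ell_k+w_k$ with $w_k\in U^p_\#(\epsilon\mathbb Z)$ such that $\langle\psi^\epsilon_{{\rm coll},k}D(\ell_k+w_k),Ds\rangle_{S_k^{\rm rep}}=0$ for all $s\in U^p_\#(\epsilon\mathbb Z)$. HQC problem: $u^H\in U^H_\#$ with $\sum_{k=1}^KH_k\langle\psi^\epsilon_{{\rm coll},k}D\mathcal R_k(u^H),D\mathcal R_k(v^H)\rangle_{S_k^{\rm rep}}=\langle f,v^H\rangle_X$ for all $v^H\in U^H_\#$. Reconstruction: $u^{H,c}(X_i)=u^H(X_i)+w_k(X_i)$ for $X_i\in S_k$, with $w_k=\mathcal R_k(u^H)-\ell_k$ computed for $u^H$. *)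

theory Defs
  imports Complex_Main
begin

text \<open>Grid functions on eps*Z are represented as int => real, with u i standing for u(X_i).
Two-scale functions are int => int => real, g i j standing for g(X_i, Y_j).
Note X_i / eps = i.\<close>

definition per :: "nat \<Rightarrow> (int \<Rightarrow> real) \<Rightarrow> bool" where
  "per N u \<longleftrightarrow> (\<forall>i. u (i + int N) = u i)"

definition avgX :: "nat \<Rightarrow> (int \<Rightarrow> real) \<Rightarrow> real" where
  "avgX N u = (\<Sum>i = 1..int N. u i) / real N"

definition innerX :: "nat \<Rightarrow> (int \<Rightarrow> real) \<Rightarrow> (int \<Rightarrow> real) \<Rightarrow> real" where
  "innerX N u v = (\<Sum>i = 1..int N. u i * v i) / real N"

definition Dd :: "real \<Rightarrow> (int \<Rightarrow> real) \<Rightarrow> int \<Rightarrow> real" where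
  "Dd \<epsilon> u i = (u (i + 1) - u i) / \<epsilon>"

definition L2n :: "nat \<Rightarrow> (int \<Rightarrow> real) \<Rightarrow> real" where
  "L2n N u = sqrt (innerX N u u)"

definition H1s :: "nat \<Rightarrow> real \<Rightarrow> (int \<Rightarrow> real) \<Rightarrow> real" where
  "H1s N \<epsilon> u = L2n N (Dd \<epsilon> u)"

text \<open>The supremum is over nonzero mean-zero N-periodic w; 0 is inserted
so that the (degenerate, N = 1) empty case gives 0; for N >= 2 this changes nothing since
the set is symmetric under w -> -w.\<close>
definition Hm1 :: "nat \<Rightarrow> real \<Rightarrow> (int \<Rightarrow> real) \<Rightarrow> real" where
  "Hm1 N \<epsilon> u = Sup (insert 0 {innerX N u w / H1s N \<epsilon> w | w.
       per N w \<and> avgX N w = 0 \<and> w \<noteq> (\<lambda>_. 0)})"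

definition Up_sharp :: "nat \<Rightarrow> (int \<Rightarrow> real) \<Rightarrow> bool" where
  "Up_sharp p w \<longleftrightarrow> per p w \<and> (\<Sum>i = 1..int p. w i) = 0"

definition two_scale :: "nat \<Rightarrow> nat \<Rightarrow> (int \<Rightarrow> int \<Rightarrow> real) \<Rightarrow> bool" where
  "two_scale N p g \<longleftrightarrow> (\<forall>i j. g (i + int N) j = g i j \<and> g i (j + int p) = g i j)"

definition DX :: "real \<Rightarrow> (int \<Rightarrow> int \<Rightarrow> real) \<Rightarrow> int \<Rightarrow> int \<Rightarrow> real" where
  "DX \<epsilon> g i j = (g (i + 1) j - g i j) / \<epsilon>"

definition DY :: "(int \<Rightarrow> int \<Rightarrow> real) \<Rightarrow> int \<Rightarrow> int \<Rightarrow> real" where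
  "DY g i j = g i (j + 1) - g i j"

definition Linf :: "nat \<Rightarrow> nat \<Rightarrow> (int \<Rightarrow> int \<Rightarrow> real) \<Rightarrow> real" where
  "Linf N p g = Max {\<bar>g i j\<bar> | i j. i \<in> {1..int N} \<and> j \<in> {1..int p}}"

definition cell_sol :: "nat \<Rightarrow> nat \<Rightarrow> (int \<Rightarrow> int \<Rightarrow> real) \<Rightarrow> (int \<Rightarrow> int \<Rightarrow> real) \<Rightarrow> bool" where
  "cell_sol N p \<psi> \<chi> \<longleftrightarrow> two_scale N p \<chi>
     \<and> (\<forall>i. (\<Sum>j = 1..int p. \<chi> i j) / real p = 0)
     \<and> (\<forall>i j. - DY (\<lambda>i' j'. \<psi> i' j' * DY \<chi> i' j') i j = DY \<psi> i j)"

definition mesh :: "nat \<Rightarrow> nat \<Rightarrow> (nat \<Rightarrow> int) \<Rightarrow> bool" where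
  "mesh N K idx \<longleftrightarrow> K \<ge> 1 \<and> idx 1 = 1 \<and> (\<forall>k\<in>{1..K}. idx k < idx (k + 1))
     \<and> idx K \<le> int N \<and> idx (K + 1) = int N + 1"

definition Hk :: "real \<Rightarrow> (nat \<Rightarrow> int) \<Rightarrow> nat \<Rightarrow> real" where
  "Hk \<epsilon> idx k = \<epsilon> * real_of_int (idx (k + 1) - idx k)"

definition Hmax :: "real \<Rightarrow> nat \<Rightarrow> (nat \<Rightarrow> int) \<Rightarrow> real" where
  "Hmax \<epsilon> K idx = Max (Hk \<epsilon> idx ` {1..K})"

definition UH_per :: "nat \<Rightarrow> nat \<Rightarrow> (nat \<Rightarrow> int) \<Rightarrow> (int \<Rightarrow> real) \<Rightarrow> bool" where
  "UH_per N K idx v \<longleftrightarrow> per N v \<and> (\<forall>k\<in>{1..K}. \<exists>a b::real. \<forall>i.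
      idx k \<le> i \<and> i \<le> idx (k + 1) \<longrightarrow> v i = a + b * real_of_int i)"

definition UH_sharp :: "nat \<Rightarrow> nat \<Rightarrow> (nat \<Rightarrow> int) \<Rightarrow> (int \<Rightarrow> real) \<Rightarrow> bool" where
  "UH_sharp N K idx v \<longleftrightarrow> UH_per N K idx v \<and> avgX N v = 0"

definition sampling :: "nat \<Rightarrow> nat \<Rightarrow> (nat \<Rightarrow> int) \<Rightarrow> (nat \<Rightarrow> int) \<Rightarrow> (nat \<Rightarrow> int) \<Rightarrow> bool" where
  "sampling p K idx rep coll \<longleftrightarrow> (\<forall>k\<in>{1..K}. idx k \<le> rep k \<and> rep k + int p \<le> idx (k + 1)
      \<and> rep k \<le> coll k \<and> coll k < rep k + int p)"

definition lin :: "(nat \<Rightarrow> int) \<Rightarrow> (int \<Rightarrow> real) \<Rightarrow> nat \<Rightarrow> int \<Rightarrow> real" where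
  "lin idx v k i = v (idx k) + (v (idx (k + 1)) - v (idx k)) / real_of_int (idx (k + 1) - idx k)
      * real_of_int (i - idx k)"

definition innerRep :: "nat \<Rightarrow> int \<Rightarrow> (int \<Rightarrow> real) \<Rightarrow> (int \<Rightarrow> real) \<Rightarrow> real" where
  "innerRep p r a b = (\<Sum>i = r..r + int p - 1. a i * b i) / real p"

text \<open>psi_coll,k (X_i) = psi(X_{coll k}, X_i/eps) = psi (coll k) i.\<close>
definition corr :: "real \<Rightarrow> nat \<Rightarrow> (int \<Rightarrow> int \<Rightarrow> real) \<Rightarrow> (nat \<Rightarrow> int) \<Rightarrow> (nat \<Rightarrow> int)
     \<Rightarrow> (nat \<Rightarrow> int) \<Rightarrow> (int \<Rightarrow> real) \<Rightarrow> nat \<Rightarrow> int \<Rightarrow> real" where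
  "corr \<epsilon> p \<psi> idx rep coll v k = (THE w. Up_sharp p w \<and> (\<forall>s. Up_sharp p s \<longrightarrow>
      innerRep p (rep k) (\<lambda>i. \<psi> (coll k) i * Dd \<epsilon> (\<lambda>i'. lin idx v k i' + w i') i) (Dd \<epsilon> s) = 0))"

definition Rk :: "real \<Rightarrow> nat \<Rightarrow> (int \<Rightarrow> int \<Rightarrow> real) \<Rightarrow> (nat \<Rightarrow> int) \<Rightarrow> (nat \<Rightarrow> int)
     \<Rightarrow> (nat \<Rightarrow> int) \<Rightarrow> (int \<Rightarrow> real) \<Rightarrow> nat \<Rightarrow> int \<Rightarrow> real" where
  "Rk \<epsilon> p \<psi> idx rep coll v k i = lin idx v k i + corr \<epsilon> p \<psi> idx rep coll v k i"

definition aHQC :: "real \<Rightarrow> nat \<Rightarrow> nat \<Rightarrow> (int \<Rightarrow> int \<Rightarrow> real) \<Rightarrow> (nat \<Rightarrow> int) \<Rightarrow> (nat \<Rightarrow> int)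
     \<Rightarrow> (nat \<Rightarrow> int) \<Rightarrow> (int \<Rightarrow> real) \<Rightarrow> (int \<Rightarrow> real) \<Rightarrow> real" where
  "aHQC \<epsilon> p K \<psi> idx rep coll u v = (\<Sum>k = 1..K. Hk \<epsilon> idx k *
      innerRep p (rep k) (\<lambda>i. \<psi> (coll k) i * Dd \<epsilon> (Rk \<epsilon> p \<psi> idx rep coll u k) i)
                         (Dd \<epsilon> (Rk \<epsilon> p \<psi> idx rep coll v k)))"

definition HQC_sol :: "nat \<Rightarrow> real \<Rightarrow> nat \<Rightarrow> nat \<Rightarrow> (int \<Rightarrow> int \<Rightarrow> real) \<Rightarrow> (nat \<Rightarrow> int)
     \<Rightarrow> (nat \<Rightarrow> int) \<Rightarrow> (nat \<Rightarrow> int) \<Rightarrow> (int \<Rightarrow> real) \<Rightarrow> (int \<Rightarrow> real) \<Rightarrow> bool" where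
  "HQC_sol N \<epsilon> p K \<psi> idx rep coll f u \<longleftrightarrow> UH_sharp N K idx u \<and>
     (\<forall>v. UH_sharp N K idx v \<longrightarrow> aHQC \<epsilon> p K \<psi> idx rep coll u v = innerX N f v)"

text \<open>Reconstruction u^{H,c}(X_i) = u^H(X_i) + w_k(X_i) for X_i in S_k (i in 1..N),
extended N-periodically.\<close>
definition recon :: "nat \<Rightarrow> real \<Rightarrow> nat \<Rightarrow> nat \<Rightarrow> (int \<Rightarrow> int \<Rightarrow> real) \<Rightarrow> (nat \<Rightarrow> int)
     \<Rightarrow> (nat \<Rightarrow> int) \<Rightarrow> (nat \<Rightarrow> int) \<Rightarrow> (int \<Rightarrow> real) \<Rightarrow> int \<Rightarrow> real" where
  "recon N \<epsilon> p K \<psi> idx rep coll u i =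
     (let i' = (i - 1) mod int N + 1 in
      u i' + (\<Sum>k = 1..K. if idx k \<le> i' \<and> i' < idx (k + 1)
                             then corr \<epsilon> p \<psi> idx rep coll u k i' else 0))"

definition uhat :: "real \<Rightarrow> (int \<Rightarrow> int \<Rightarrow> real) \<Rightarrow> (int \<Rightarrow> real) \<Rightarrow> int \<Rightarrow> real" where
  "uhat \<epsilon> \<chi> u i = u i + \<epsilon> * \<chi> i i * Dd \<epsilon> u i"

end

theory Submission
  imports Defs
begin

lemma tele_sum:
  fixes s :: "int \<Rightarrow> real"
  shows "(\<Sum>i = a..a + int n - 1. (s (i+1) - s i)) = s (a + int n) - s a"
proof (induction n)
  case 0 then show ?case by simp
next
  case (Suc n)
  have "{a..a + int (Suc n) - 1} = insert (a + int n) {a..a + int n - 1}" by auto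
  then have "(\<Sum>i = a..a + int (Suc n) - 1. (s (i+1) - s i))
     = (s (a + int n + 1) - s (a + int n)) + (\<Sum>i = a..a + int n - 1. (s (i+1) - s i))"
    by simp
  also have "\<dots> = s (a + int n + 1) - s a" using Suc by simp
  finally show ?case by (simp add: add.assoc add.commute[of 1])
qed
lemma per_nat: "per n d \<Longrightarrow> d (x + int n * int m) = d x"
proof (induction m arbitrary: x)
  case 0 then show ?case by simp
next
  case (Suc m)
  have "d (x + int n * int (Suc m)) = d ((x + int n * int m) + int n)"
    by (simp add: algebra_simps)
  also have "\<dots> = d (x + int n * int m)" using Suc.prems unfolding per_def by blast
  finally show ?case using Suc by simp
qed

lemma per_int: assumes P: "per n d" shows "d (x + int n * t) = d x"
proof (cases "t \<ge> 0")
  case True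
  then obtain m where "t = int m" using nonneg_int_cases by blast
  then show ?thesis using per_nat P by blast
next
  case False
  then obtain m where m: "- t = int m" using nonneg_int_cases[of "-t"] by force
  have "d ((x + int n * t) + int n * int m) = d (x + int n * t)" using per_nat P by blast
  moreover have "(x + int n * t) + int n * int m = x"
  proof -
    have "t = - int m" using m by simp
    then show ?thesis by (simp add: algebra_simps)
  qed
  ultimately show ?thesis by simp
qed

lemma per_red:
  assumes "per n d" "0 < n"
  shows "d j = d ((j - 1) mod int n + 1)" "1 \<le> (j - 1) mod int n + 1" "(j - 1) mod int n + 1 \<le> int n"
proof -
  have e: "j = ((j - 1) mod int n + 1) + int n * ((j - 1) div int n)"
    using div_mult_mod_eq[of "j-1" "int n"] by (simp add: algebra_simps)
  show "d j = d ((j - 1) mod int n + 1)" using per_int[OF assms(1), of "(j - 1) mod int n + 1" "(j - 1) div int n"] e by simp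
  show "1 \<le> (j - 1) mod int n + 1" using assms(2) by simp
  have "(j - 1) mod int n < int n" using assms(2) by simp
  then show "(j - 1) mod int n + 1 \<le> int n" by simp
qed
lemma lip_step:
  fixes e :: "int \<Rightarrow> real"
  assumes "\<And>j. \<bar>e (j+1) - e j\<bar> \<le> \<beta>"
  shows "\<bar>e x - e y\<bar> \<le> \<beta> * \<bar>real_of_int (x - y)\<bar>"
proof -
  have b: "\<beta> \<ge> 0" using assms[of 0] by simp
  have up: "\<bar>e (y + int n) - e y\<bar> \<le> \<beta> * real n" for n y
  proof (induction n)
    case 0 then show ?case by simp
  next
    case (Suc n)
    have yy: "y + int (Suc n) = y + int n + 1" by simp
    have "\<bar>e (y + int (Suc n)) - e y\<bar> \<le> \<bar>e (y + int n + 1) - e (y + int n)\<bar> + \<bar>e (y + int n) - e y\<bar>"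
      unfolding yy by linarith
    also have "\<dots> \<le> \<beta> + \<beta> * real n" using assms Suc by (meson add_mono)
    finally show ?case by (simp add: algebra_simps)
  qed
  show ?thesis
  proof (cases "x \<ge> y")
    case True
    then obtain n where "x - y = int n" using nonneg_int_cases[of "x-y"] by force
    then have "x = y + int n" by simp
    then show ?thesis using up[of y n] by simp
  next
    case False
    then obtain n where "y - x = int n" using nonneg_int_cases[of "y-x"] by force
    then have "y = x + int n" by simp
    then show ?thesis using up[of x n] by (simp add: abs_minus_commute)
  qed
qed

lemma step_all:
  fixes e :: "int \<Rightarrow> real"
  assumes "per n e" "0 < n" "\<And>j. j \<in> {1..int n} \<Longrightarrow> \<bar>e (j+1) - e j\<bar> \<le> \<beta>"
  shows "\<bar>e (j+1) - e j\<bar> \<le> \<beta>"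
proof -
  have pe: "per n (\<lambda>j. e (j+1) - e j)" unfolding per_def
  proof
    fix i
    have "i + int n + 1 = (i + 1) + int n" by simp
    then have "e (i + int n + 1) = e (i + 1)" using assms(1) unfolding per_def by metis
    then show "e (i + int n + 1) - e (i + int n) = e (i + 1) - e i"
      using assms(1) unfolding per_def by simp
  qed
  define j0 where "j0 = (j - 1) mod int n + 1"
  have "e (j+1) - e j = e (j0+1) - e j0" "j0 \<in> {1..int n}"
    using per_red[OF pe assms(2), of j] unfolding j0_def by auto
  then show ?thesis using assms(3) by simp
qed

lemma meanzero_bound:
  fixes e :: "int \<Rightarrow> real"
  assumes "per p e" "0 < p" "(\<Sum>j = 1..int p. e j) = 0" "\<And>j. \<bar>e (j+1) - e j\<bar> \<le> \<beta>"
  shows "\<bar>e j\<bar> \<le> real p * \<beta>"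
proof -
  define j0 where "j0 = (j - 1) mod int p + 1"
  have j0: "e j = e j0" "1 \<le> j0" "j0 \<le> int p" using per_red[OF assms(1,2)] j0_def by auto
  have b: "\<beta> \<ge> 0" using assms(4)[of 0] by simp
  have each: "\<bar>e j0 - e l\<bar> \<le> real p * \<beta>" if "l \<in> {1..int p}" for l
  proof -
    have "\<bar>e j0 - e l\<bar> \<le> \<beta> * \<bar>real_of_int (j0 - l)\<bar>" using lip_step assms(4) by blast
    moreover have "\<bar>real_of_int (j0 - l)\<bar> \<le> real p" using that j0 by auto
    ultimately show ?thesis using b by (smt (verit) mult.commute mult_left_mono)
  qed
  have "(\<Sum>l = 1..int p. (e j0 - e l)) = real p * e j0"
    using assms(3) by (simp add: sum_subtractf)
  then have "real p * \<bar>e j0\<bar> = \<bar>\<Sum>l = 1..int p. (e j0 - e l)\<bar>" by (simp add: abs_mult)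
  also have "\<dots> \<le> (\<Sum>l = 1..int p. \<bar>e j0 - e l\<bar>)" by (rule sum_abs)
  also have "\<dots> \<le> (\<Sum>l = 1..int p. real p * \<beta>)" by (rule sum_mono) (use each in auto)
  also have "\<dots> = real p * (real p * \<beta>)" by simp
  finally have "\<bar>e j0\<bar> \<le> real p * \<beta>" using assms(2) by simp
  then show ?thesis using j0 by simp
qed



lemma const_int:
  fixes G :: "int \<Rightarrow> real"
  assumes "\<And>j. G (j+1) = G j"
  shows "G j = G 0"
proof (induction j rule: int_induct[where k=0])
  case base then show ?case by simp
next
  case (step1 i) then show ?case using assms by simp
next
  case (step2 i) then show ?case using assms[of "i-1"] by simp
qed

lemma cell_q:
  assumes cs: "cell_sol N p \<psi> \<chi>" and p: "0 < p"
    and bnd: "\<forall>i j. c \<le> \<psi> i j \<and> \<psi> i j \<le> C" and c: "0 < c"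
  defines "q \<equiv> \<lambda>i. \<psi> i 0 * (1 + DY \<chi> i 0)"
  shows "DY \<chi> i j = q i / \<psi> i j - 1"
    and "q i * (\<Sum>j = 1..int p. 1 / \<psi> i j) = real p"
    and "c \<le> q i" and "q i \<le> C"
proof -
  have ts: "two_scale N p \<chi>" and eq: "\<And>i j. - DY (\<lambda>i' j'. \<psi> i' j' * DY \<chi> i' j') i j = DY \<psi> i j"
    and mz: "\<And>i. (\<Sum>j = 1..int p. \<chi> i j) / real p = 0"
    using cs unfolding cell_sol_def by auto
  have G: "\<psi> i j * (1 + DY \<chi> i j) = q i" for j
  proof -
    have "\<psi> i (j+1) * (1 + DY \<chi> i (j+1)) = \<psi> i j * (1 + DY \<chi> i j)" for j
      using eq[of i j] unfolding DY_def by (simp add: algebra_simps)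
    then show ?thesis unfolding q_def using const_int[of "\<lambda>j. \<psi> i j * (1 + DY \<chi> i j)"] by blast
  qed
  have pos: "\<psi> i j > 0" for j using bnd c by (meson less_le_trans)
  have Cp: "C > 0" using bnd c by (meson less_le_trans)
  show dy: "DY \<chi> i j = q i / \<psi> i j - 1" for j
    using G[of j] pos[of j] by (simp add: field_simps)
  have "(\<Sum>j = 1..int p. DY \<chi> i j) = \<chi> i (1 + int p) - \<chi> i 1"
    using tele_sum[of "\<chi> i" 1 p] unfolding DY_def by simp
  also have "\<dots> = 0" using ts unfolding two_scale_def by (metis add.commute diff_self)
  finally have "(\<Sum>j = 1..int p. (q i / \<psi> i j - 1)) = 0" using dy by simp
  then have "(\<Sum>j = 1..int p. q i * (1 / \<psi> i j)) - real p = 0"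
    by (simp add: sum_subtractf)
  then show S: "q i * (\<Sum>j = 1..int p. 1 / \<psi> i j) = real p" by (simp add: sum_distrib_left)
  have "(\<Sum>j = 1..int p. 1 / \<psi> i j) \<le> (\<Sum>j = 1..int p. 1 / c)"
    by (rule sum_mono) (use bnd c pos in \<open>auto intro: divide_left_mono\<close>)
  then have S1: "(\<Sum>j = 1..int p. 1 / \<psi> i j) \<le> real p / c" by simp
  have "(\<Sum>j = 1..int p. 1 / C) \<le> (\<Sum>j = 1..int p. 1 / \<psi> i j)"
    by (rule sum_mono) (use bnd c pos Cp in \<open>auto intro!: divide_left_mono mult_pos_pos\<close>)
  then have S2: "real p / C \<le> (\<Sum>j = 1..int p. 1 / \<psi> i j)" by simp
  have Sp: "(\<Sum>j = 1..int p. 1 / \<psi> i j) > 0" using S2 Cp p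
    by (smt (verit) divide_pos_pos of_nat_0_less_iff)
  have qe: "q i = real p / (\<Sum>j = 1..int p. 1 / \<psi> i j)" using S Sp by (simp add: field_simps)
  show "c \<le> q i" unfolding qe using S1 Sp c p
    by (simp add: field_simps)
  show "q i \<le> C" unfolding qe using S2 Sp Cp p
    by (simp add: field_simps)
qed


lemma inv_diff:
  fixes x y c \<delta> :: real
  assumes "0 < c" "c \<le> x" "c \<le> y" "\<bar>x - y\<bar> \<le> \<delta>"
  shows "\<bar>1/x - 1/y\<bar> \<le> \<delta> / c^2"
proof -
  have xp: "x > 0" "y > 0" using assms by auto
  have "\<bar>1/x - 1/y\<bar> = \<bar>x - y\<bar> / (x*y)" using xp by (simp add: field_simps abs_div abs_minus_commute)
  also have "\<dots> \<le> \<delta> / (x*y)" using assms(4) xp by (simp add: divide_right_mono)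
  also have "\<dots> \<le> \<delta> / c^2"
  proof -
    have "c^2 \<le> x*y" using assms by (simp add: power2_eq_square mult_mono)
    moreover have "\<delta> \<ge> 0" using assms(4) by linarith
    moreover have "0 < x*y*c^2" using xp assms(1) by simp
    ultimately show ?thesis using divide_left_mono by blast
  qed
  finally show ?thesis .
qed

lemma row_diff:
  fixes a a' :: "int \<Rightarrow> real"
  assumes c: "0 < c" and p: "0 < p"
    and ba: "\<And>j. c \<le> a j \<and> a j \<le> C" and ba': "\<And>j. c \<le> a' j \<and> a' j \<le> C"
    and d: "\<And>j. \<bar>a j - a' j\<bar> \<le> \<delta>"
    and qS: "q * (\<Sum>j = 1..int p. 1 / a j) = real p"
    and qS': "q' * (\<Sum>j = 1..int p. 1 / a' j) = real p"
    and q'C: "q' \<le> C"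
  shows "\<bar>q / a j - q' / a' j\<bar> \<le> (C^2 / c^3 + C / c^2) * \<delta>"
proof -
  define S where "S = (\<Sum>j = 1..int p. 1 / a j)"
  define S' where "S' = (\<Sum>j = 1..int p. 1 / a' j)"
  have Cp: "C > 0" using ba[of 0] c by linarith
  have dp: "\<delta> \<ge> 0" using d[of 0] by linarith
  have ap: "\<And>j. a j > 0" "\<And>j. a' j > 0" using ba ba' c by (meson less_le_trans)+
  have Sl: "real p / C \<le> S" unfolding S_def
  proof -
    have "(\<Sum>j = 1..int p. 1 / C) \<le> (\<Sum>j = 1..int p. 1 / a j)"
      by (rule sum_mono) (use ba c Cp ap in \<open>auto intro!: divide_left_mono mult_pos_pos\<close>)
    then show "real p / C \<le> (\<Sum>j = 1..int p. 1 / a j)" by simp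
  qed
  have Sl': "real p / C \<le> S'" unfolding S'_def
  proof -
    have "(\<Sum>j = 1..int p. 1 / C) \<le> (\<Sum>j = 1..int p. 1 / a' j)"
      by (rule sum_mono) (use ba' c Cp ap in \<open>auto intro!: divide_left_mono mult_pos_pos\<close>)
    then show "real p / C \<le> (\<Sum>j = 1..int p. 1 / a' j)" by simp
  qed
  have pC: "real p / C > 0" using p Cp by simp
  have Sp: "S > 0" "S' > 0" using Sl Sl' pC by linarith+
  have dS: "\<bar>S - S'\<bar> \<le> real p * (\<delta> / c^2)"
  proof -
    have "\<bar>S - S'\<bar> = \<bar>\<Sum>j = 1..int p. (1 / a j - 1 / a' j)\<bar>" unfolding S_def S'_def by (simp add: sum_subtractf)
    also have "\<dots> \<le> (\<Sum>j = 1..int p. \<bar>1 / a j - 1 / a' j\<bar>)" by (rule sum_abs)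
    also have "\<dots> \<le> (\<Sum>j = 1..int p. \<delta> / c^2)"
      by (rule sum_mono) (use inv_diff c ba ba' d in blast)
    finally show ?thesis by simp
  qed
  have q: "q = real p / S" "q' = real p / S'" using qS qS' Sp unfolding S_def S'_def by (simp_all add: field_simps)
  have "q - q' = real p * (S' - S) / (S * S')"
    unfolding q using Sp by (simp add: field_simps)
  then have "\<bar>q - q'\<bar> = real p * \<bar>S - S'\<bar> / (S * S')"
    using Sp by (simp add: abs_div abs_mult abs_minus_commute)
  also have "\<dots> \<le> real p * (real p * (\<delta> / c^2)) / ((real p / C) * (real p / C))"
  proof (rule frac_le)
    show "0 \<le> real p * (real p * (\<delta> / c\<^sup>2))" using dp by simp
    show "real p * \<bar>S - S'\<bar> \<le> real p * (real p * (\<delta> / c\<^sup>2))" using mult_left_mono[OF dS, of "real p"] by simp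
    show "0 < real p / C * (real p / C)" by (intro mult_pos_pos pC)
    show "real p / C * (real p / C) \<le> S * S'" using mult_mono[OF Sl Sl'] pC Sp by simp
  qed
  also have "\<dots> = C^2 * \<delta> / c^2" using p Cp c by (simp add: field_simps power2_eq_square)
  finally have dq: "\<bar>q - q'\<bar> \<le> C^2 * \<delta> / c^2" .
  have apos: "a j > 0" "a' j > 0" using ba[of j] ba'[of j] c by linarith+
  have "q / a j - q' / a' j = (q - q') / a j + q' * (1 / a j - 1 / a' j)"
    using apos by (simp add: field_simps)
  then have "\<bar>q / a j - q' / a' j\<bar> \<le> \<bar>(q - q') / a j\<bar> + \<bar>q' * (1 / a j - 1 / a' j)\<bar>"
    by (simp only: abs_triangle_ineq)
  also have "\<dots> = \<bar>q - q'\<bar> / a j + \<bar>q'\<bar> * \<bar>1 / a j - 1 / a' j\<bar>"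
    using apos by (simp add: abs_div abs_mult)
  also have "\<dots> \<le> (C^2 * \<delta> / c^2) / c + C * (\<delta> / c^2)"
  proof (rule add_mono)
    show "\<bar>q - q'\<bar> / a j \<le> C\<^sup>2 * \<delta> / c\<^sup>2 / c"
    proof (rule frac_le)
      show "0 \<le> C\<^sup>2 * \<delta> / c\<^sup>2" using dp by simp
    qed (use dq apos ba[of j] c in auto)
    have "q' \<ge> 0" using q(2) Sp by simp
    then have "\<bar>q'\<bar> \<le> C" using q'C by simp
    moreover have "\<bar>1 / a j - 1 / a' j\<bar> \<le> \<delta> / c^2" using inv_diff c ba ba' d by blast
    ultimately show "\<bar>q'\<bar> * \<bar>1 / a j - 1 / a' j\<bar> \<le> C * (\<delta> / c\<^sup>2)"
      using Cp by (intro mult_mono) auto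
  qed
  also have "\<dots> = (C^2 / c^3 + C / c^2) * \<delta>" using c by (simp add: field_simps power2_eq_square power3_eq_cube)
  finally show ?thesis .
qed

lemma chi_row:
  assumes cs: "cell_sol N p \<psi> \<chi>" and p: "0 < p"
    and bnd: "\<forall>i j. c \<le> \<psi> i j \<and> \<psi> i j \<le> C" and c: "0 < c"
    and d: "\<And>j. \<bar>\<psi> i j - \<psi> i' j\<bar> \<le> \<delta>"
  shows "\<bar>\<chi> i j - \<chi> i' j\<bar> \<le> real p * ((C^2 / c^3 + C / c^2) * \<delta>)"
proof -
  define q where "q \<equiv> \<lambda>i. \<psi> i 0 * (1 + DY \<chi> i 0)"
  note cq = cell_q[OF cs p bnd c, folded q_def]
  have ts: "two_scale N p \<chi>" and mz: "\<And>i. (\<Sum>j = 1..int p. \<chi> i j) / real p = 0"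
    using cs unfolding cell_sol_def by auto
  define e where "e = (\<lambda>j. \<chi> i j - \<chi> i' j)"
  have pe: "per p e" unfolding per_def e_def
  proof
    fix j show "\<chi> i (j + int p) - \<chi> i' (j + int p) = \<chi> i j - \<chi> i' j"
      using ts unfolding two_scale_def by simp
  qed
  have se: "(\<Sum>j = 1..int p. e j) = 0"
  proof -
    have "(\<Sum>j = 1..int p. \<chi> i j) = 0" "(\<Sum>j = 1..int p. \<chi> i' j) = 0" using mz[of i] mz[of i'] p by auto
    then show ?thesis unfolding e_def by (simp add: sum_subtractf)
  qed
  have st: "\<bar>e (j+1) - e j\<bar> \<le> (C^2 / c^3 + C / c^2) * \<delta>" for j
  proof -
    have "e (j+1) - e j = DY \<chi> i j - DY \<chi> i' j" unfolding e_def DY_def by simp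
    also have "\<dots> = q i / \<psi> i j - q i' / \<psi> i' j" using cq(1)[of i j] cq(1)[of i' j] unfolding q_def by simp
    finally have eq: "e (j+1) - e j = q i / \<psi> i j - q i' / \<psi> i' j" .
    have b1: "\<And>j. c \<le> \<psi> i j \<and> \<psi> i j \<le> C" "\<And>j. c \<le> \<psi> i' j \<and> \<psi> i' j \<le> C" using bnd by auto
    show ?thesis unfolding eq q_def
      by (rule row_diff[OF c p b1(1) b1(2) d cq(2)[of i] cq(2)[of i'] cq(4)[of i']])
  qed
  show ?thesis using meanzero_bound[OF pe p se st] unfolding e_def by simp
qed
lemma Linf_ge:
  assumes "i \<in> {1..int N}" "j \<in> {1..int p}"
  shows "\<bar>g i j\<bar> \<le> Linf N p g"
proof -
  have "{\<bar>g i j\<bar> | i j. i \<in> {1..int N} \<and> j \<in> {1..int p}} = (\<lambda>(i,j). \<bar>g i j\<bar>) ` ({1..int N} \<times> {1..int p})"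
    by fastforce
  then have fin: "finite {\<bar>g i j\<bar> | i j. i \<in> {1..int N} \<and> j \<in> {1..int p}}" by simp
  show ?thesis unfolding Linf_def by (rule Max_ge[OF fin]) (use assms in blast)
qed

lemma psi_lip:
  assumes ts: "two_scale N p \<psi>" and N: "0 < N" and p: "0 < p" and eps: "0 < \<epsilon>"
    and L: "Linf N p (DX \<epsilon> \<psi>) \<le> C'"
  shows "\<bar>\<psi> x j - \<psi> y j\<bar> \<le> C' * \<epsilon> * \<bar>real_of_int (x - y)\<bar>"
proof -
  have s1: "\<bar>\<psi> (l+1) j - \<psi> l j\<bar> \<le> C' * \<epsilon>" if "l \<in> {1..int N}" for l j
  proof -
    have pj: "per p (\<lambda>j. \<psi> l j)" "per p (\<lambda>j. \<psi> (l+1) j)" using ts unfolding two_scale_def per_def by auto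
    define j0 where "j0 = (j - 1) mod int p + 1"
    have j0: "\<psi> l j = \<psi> l j0" "\<psi> (l+1) j = \<psi> (l+1) j0" "j0 \<in> {1..int p}"
      using per_red[OF pj(1) p, of j] per_red[OF pj(2) p, of j] unfolding j0_def by auto
    have "\<bar>DX \<epsilon> \<psi> l j0\<bar> \<le> C'" using Linf_ge[OF that j0(3), of "DX \<epsilon> \<psi>"] L by linarith
    then have "\<bar>\<psi> (l+1) j0 - \<psi> l j0\<bar> / \<epsilon> \<le> C'" unfolding DX_def using eps by (simp add: abs_div)
    then show ?thesis using j0 eps by (simp add: field_simps)
  qed
  have pN: "per N (\<lambda>l. \<psi> l j)" using ts unfolding two_scale_def per_def by auto
  have "\<bar>\<psi> (l+1) j - \<psi> l j\<bar> \<le> C' * \<epsilon>" for l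
    using step_all[OF pN N, of "C' * \<epsilon>" l] s1 by blast
  from lip_step[of "\<lambda>l. \<psi> l j", OF this] show ?thesis by simp
qed


lemma uniq_cell:
  fixes L w0 a :: "int \<Rightarrow> real"
  assumes apos: "\<And>i. a i > 0" and p: "0 < p" and eps: "0 < \<epsilon>"
    and K: "\<And>i. a i * Dd \<epsilon> (\<lambda>i'. L i' + w0 i') i = K"
    and w0: "Up_sharp p w0"
  shows "(THE w. Up_sharp p w \<and> (\<forall>s. Up_sharp p s \<longrightarrow>
      innerRep p r (\<lambda>i. a i * Dd \<epsilon> (\<lambda>i'. L i' + w i') i) (Dd \<epsilon> s) = 0)) = w0"
proof (rule the_equality)
  have zero: "innerRep p r (\<lambda>i. a i * Dd \<epsilon> (\<lambda>i'. L i' + w0 i') i) (Dd \<epsilon> s) = 0" if s: "Up_sharp p s" for s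
  proof -
    have "(\<Sum>i = r..r + int p - 1. a i * Dd \<epsilon> (\<lambda>i'. L i' + w0 i') i * Dd \<epsilon> s i)
        = (\<Sum>i = r..r + int p - 1. (K / \<epsilon>) * (s (i+1) - s i))"
    proof (rule sum.cong[OF refl])
      fix i
      have "a i * Dd \<epsilon> (\<lambda>i'. L i' + w0 i') i * Dd \<epsilon> s i = K * Dd \<epsilon> s i" using K by simp
      then show "a i * Dd \<epsilon> (\<lambda>i'. L i' + w0 i') i * Dd \<epsilon> s i = K / \<epsilon> * (s (i + 1) - s i)"
        unfolding Dd_def[of _ s] by simp
    qed
    also have "\<dots> = (K / \<epsilon>) * (s (r + int p) - s r)" by (simp only: sum_distrib_left[symmetric] tele_sum)
    also have "\<dots> = 0" using s unfolding Up_sharp_def per_def by simp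
    finally show ?thesis unfolding innerRep_def by simp
  qed
  show "Up_sharp p w0 \<and> (\<forall>s. Up_sharp p s \<longrightarrow>
      innerRep p r (\<lambda>i. a i * Dd \<epsilon> (\<lambda>i'. L i' + w0 i') i) (Dd \<epsilon> s) = 0)" using w0 zero by blast
  fix w assume A: "Up_sharp p w \<and> (\<forall>s. Up_sharp p s \<longrightarrow>
      innerRep p r (\<lambda>i. a i * Dd \<epsilon> (\<lambda>i'. L i' + w i') i) (Dd \<epsilon> s) = 0)"
  define d where "d = (\<lambda>i. w i - w0 i)"
  have pd: "per p d" using A w0 unfolding Up_sharp_def per_def d_def by simp
  have sd: "(\<Sum>i = 1..int p. d i) = 0" using A w0 unfolding Up_sharp_def d_def by (simp add: sum_subtractf)
  have ud: "Up_sharp p d" using pd sd unfolding Up_sharp_def by simp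
  have "innerRep p r (\<lambda>i. a i * Dd \<epsilon> (\<lambda>i'. L i' + w i') i) (Dd \<epsilon> d)
      - innerRep p r (\<lambda>i. a i * Dd \<epsilon> (\<lambda>i'. L i' + w0 i') i) (Dd \<epsilon> d) = 0"
    using A zero[OF ud] ud by simp
  moreover have "innerRep p r (\<lambda>i. a i * Dd \<epsilon> (\<lambda>i'. L i' + w i') i) (Dd \<epsilon> d)
      - innerRep p r (\<lambda>i. a i * Dd \<epsilon> (\<lambda>i'. L i' + w0 i') i) (Dd \<epsilon> d)
      = (\<Sum>i = r..r + int p - 1. a i * (Dd \<epsilon> d i)^2) / real p"
    unfolding innerRep_def d_def Dd_def
    by (simp add: diff_divide_distrib[symmetric] sum_subtractf[symmetric] power2_eq_square algebra_simps)
  ultimately have "(\<Sum>i = r..r + int p - 1. a i * (Dd \<epsilon> d i)^2) = 0" using p by simp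
  then have "\<forall>i\<in>{r..r + int p - 1}. a i * (Dd \<epsilon> d i)^2 = 0"
    by (subst sum_nonneg_eq_0_iff[symmetric]) (use apos in \<open>auto intro!: mult_nonneg_nonneg simp: less_imp_le\<close>)
  then have step: "d (i+1) = d i" if "i \<in> {r..r + int p - 1}" for i
  proof -
    have "a i * (Dd \<epsilon> d i)^2 = 0" using that \<open>\<forall>i\<in>{r..r + int p - 1}. a i * (Dd \<epsilon> d i)^2 = 0\<close> by blast
    then show ?thesis using apos[of i] eps unfolding Dd_def by simp
  qed
  have off: "n < p \<Longrightarrow> d (r + int n) = d r" for n
  proof (induction n)
    case 0 then show ?case by simp
  next
    case (Suc n)
    have "d (r + int n + 1) = d (r + int n)" using step[of "r + int n"] Suc.prems by simp
    moreover have "d (r + int n) = d r" using Suc by simp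
    ultimately have h: "d (r + int n + 1) = d r" by simp
    have e: "r + int (Suc n) = r + int n + 1" by simp
    show ?case unfolding e by (rule h)
  qed
  have allc: "d j = d r" for j
  proof -
    have e: "j = (r + (j - r) mod int p) + int p * ((j - r) div int p)"
      using div_mult_mod_eq[of "j-r" "int p"] by (simp add: algebra_simps)
    have "d j = d (r + (j - r) mod int p)" using per_int[OF pd, of "r + (j - r) mod int p" "(j - r) div int p"] e by simp
    moreover obtain n where n: "(j - r) mod int p = int n" "n < p"
    proof -
      have "0 \<le> (j - r) mod int p" "(j - r) mod int p < int p" using p by simp_all
      then show ?thesis using that by (metis nat_eq_iff2 nat_less_iff)
    qed
    ultimately show ?thesis using off by simp
  qed
  have "(\<Sum>i = 1..int p. d i) = (\<Sum>i = 1..int p. d r)" by (intro sum.cong refl allc)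
  then have "real p * d r = 0" using sd by simp
  then have "d r = 0" using p by simp
  then show "w = w0" using allc unfolding d_def by (auto simp: fun_eq_iff)
qed


definition slope :: "(nat \<Rightarrow> int) \<Rightarrow> (int \<Rightarrow> real) \<Rightarrow> nat \<Rightarrow> real" where
  "slope idx v k = (v (idx (k+1)) - v (idx k)) / real_of_int (idx (k+1) - idx k)"

lemma lin_alt: "lin idx v k i = v (idx k) + slope idx v k * real_of_int (i - idx k)"
  unfolding lin_def slope_def by simp

lemma lin_step: "lin idx v k (i+1) - lin idx v k i = slope idx v k"
  unfolding lin_alt by (simp add: algebra_simps)

definition qq :: "(int \<Rightarrow> int \<Rightarrow> real) \<Rightarrow> (int \<Rightarrow> int \<Rightarrow> real) \<Rightarrow> int \<Rightarrow> real" where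
  "qq \<psi> \<chi> i = \<psi> i 0 * (1 + DY \<chi> i 0)"

lemma cell_qq:
  assumes cs: "cell_sol N p \<psi> \<chi>" and p: "0 < p"
    and bnd: "\<forall>i j. c \<le> \<psi> i j \<and> \<psi> i j \<le> C" and c: "0 < c"
  shows "\<psi> i j * (1 + DY \<chi> i j) = qq \<psi> \<chi> i" "c \<le> qq \<psi> \<chi> i" "qq \<psi> \<chi> i \<le> C"
proof -
  have pos: "\<psi> i j > 0" using bnd c by (meson less_le_trans)
  show "\<psi> i j * (1 + DY \<chi> i j) = qq \<psi> \<chi> i"
    using cell_q(1)[OF cs p bnd c, of i j] pos unfolding qq_def by (simp add: field_simps)
  show "c \<le> qq \<psi> \<chi> i" "qq \<psi> \<chi> i \<le> C" using cell_q(3,4)[OF cs p bnd c, of i] unfolding qq_def by auto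
qed

lemma corr_eq:
  assumes cs: "cell_sol N p \<psi> \<chi>" and p: "0 < p"
    and bnd: "\<forall>i j. c \<le> \<psi> i j \<and> \<psi> i j \<le> C" and c: "0 < c" and eps: "0 < \<epsilon>"
  shows "corr \<epsilon> p \<psi> idx rep coll v k = (\<lambda>i. slope idx v k * \<chi> (coll k) i)"
proof -
  have ts: "two_scale N p \<chi>" and mz: "\<And>i. (\<Sum>j = 1..int p. \<chi> i j) / real p = 0"
    using cs unfolding cell_sol_def by auto
  let ?w0 = "\<lambda>i. slope idx v k * \<chi> (coll k) i"
  have w0: "Up_sharp p ?w0" unfolding Up_sharp_def per_def
  proof
    show "\<forall>i. slope idx v k * \<chi> (coll k) (i + int p) = slope idx v k * \<chi> (coll k) i"
      using ts unfolding two_scale_def by simp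
    have "(\<Sum>j = 1..int p. \<chi> (coll k) j) = 0" using mz[of "coll k"] p by simp
    then show "(\<Sum>i = 1..int p. slope idx v k * \<chi> (coll k) i) = 0" by (simp add: sum_distrib_left[symmetric])
  qed
  have K: "\<psi> (coll k) i * Dd \<epsilon> (\<lambda>i'. lin idx v k i' + ?w0 i') i = slope idx v k / \<epsilon> * qq \<psi> \<chi> (coll k)" for i
  proof -
    have "Dd \<epsilon> (\<lambda>i'. lin idx v k i' + ?w0 i') i = slope idx v k / \<epsilon> * (1 + DY \<chi> (coll k) i)"
      unfolding Dd_def DY_def using lin_step[of idx v k i]
      by (simp add: algebra_simps add_divide_distrib diff_divide_distrib)
    then show ?thesis using cell_qq(1)[OF cs p bnd c, of "coll k" i] by (metis mult.left_commute)
  qed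
  have apos: "\<And>i. \<psi> (coll k) i > 0" using bnd c by (meson less_le_trans)
  show ?thesis unfolding corr_def using uniq_cell[OF apos p eps K w0] .
qed

lemma DRk:
  assumes cs: "cell_sol N p \<psi> \<chi>" and p: "0 < p"
    and bnd: "\<forall>i j. c \<le> \<psi> i j \<and> \<psi> i j \<le> C" and c: "0 < c" and eps: "0 < \<epsilon>"
  shows "\<psi> (coll k) i * Dd \<epsilon> (Rk \<epsilon> p \<psi> idx rep coll v k) i = slope idx v k / \<epsilon> * qq \<psi> \<chi> (coll k)"
proof -
  have "Rk \<epsilon> p \<psi> idx rep coll v k = (\<lambda>i'. lin idx v k i' + slope idx v k * \<chi> (coll k) i')"
    unfolding Rk_def[abs_def] using corr_eq[OF cs p bnd c eps] by simp
  moreover have "Dd \<epsilon> (\<lambda>i'. lin idx v k i' + slope idx v k * \<chi> (coll k) i') i = slope idx v k / \<epsilon> * (1 + DY \<chi> (coll k) i)"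
      unfolding Dd_def DY_def using lin_step[of idx v k i]
      by (simp add: algebra_simps add_divide_distrib diff_divide_distrib)
  ultimately show ?thesis using cell_qq(1)[OF cs p bnd c, of "coll k" i] by (metis mult.left_commute)
qed


lemma mesh_mono:
  assumes m: "mesh N K idx" and k: "1 \<le> k" "k \<le> k'" "k' \<le> K + 1"
  shows "idx k \<le> idx k'"
proof -
  have "k + d \<le> K + 1 \<Longrightarrow> idx k \<le> idx (k + d)" for d
  proof (induction d)
    case 0 then show ?case by simp
  next
    case (Suc d)
    have "idx (k+d) < idx (k+d+1)" using m Suc.prems k(1) unfolding mesh_def by auto
    then show ?case using Suc by simp
  qed
  from this[of "k' - k"] show ?thesis using k by simp
qed

lemma mesh_strict:
  assumes m: "mesh N K idx" and k: "1 \<le> k" "k < k'" "k' \<le> K + 1"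
  shows "idx k < idx k'"
proof -
  have "idx k < idx (k+1)" using m k unfolding mesh_def by auto
  moreover have "idx (k+1) \<le> idx k'" using mesh_mono[OF m, of "k+1" k'] k by simp
  ultimately show ?thesis by simp
qed

lemma seg_exists:
  assumes m: "mesh N K idx" and i: "1 \<le> i" "i \<le> int N"
  shows "\<exists>k. k \<in> {1..K} \<and> idx k \<le> i \<and> i < idx (k+1)"
proof -
  define A where "A = {k \<in> {1..K}. idx k \<le> i}"
  have K1: "K \<ge> 1" "idx 1 = 1" "idx (K+1) = int N + 1" using m unfolding mesh_def by auto
  have "1 \<in> A" unfolding A_def using K1 i by auto
  then have ne: "A \<noteq> {}" and fin: "finite A" unfolding A_def by auto
  define k where "k = Max A"
  have kA: "k \<in> A" unfolding k_def using Max_in[OF fin ne] .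
  have "i < idx (k+1)"
  proof (cases "k = K")
    case True then show ?thesis using K1 i by simp
  next
    case False
    then have "k + 1 \<in> {1..K}" using kA unfolding A_def by auto
    moreover have "k + 1 \<notin> A" using Max_ge[OF fin, of "k+1"] unfolding k_def by auto
    ultimately show ?thesis unfolding A_def by auto
  qed
  then show ?thesis using kA unfolding A_def by auto
qed

lemma seg_unique:
  assumes m: "mesh N K idx" and "k \<in> {1..K}" "idx k \<le> i" "i < idx (k+1)"
    and "k' \<in> {1..K}" "idx k' \<le> i" "i < idx (k'+1)"
  shows "k = k'"
proof (rule ccontr)
  assume "k \<noteq> k'"
  then consider "k < k'" | "k' < k" by linarith
  then show False
  proof cases
    case 1
    then have "idx (k+1) \<le> idx k'" using mesh_mono[OF m, of "k+1" k'] assms by auto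
    then show False using assms by simp
  next
    case 2
    then have "idx (k'+1) \<le> idx k" using mesh_mono[OF m, of "k'+1" k] assms by auto
    then show False using assms by simp
  qed
qed

lemma int_split_sum:
  fixes F :: "int \<Rightarrow> real"
  assumes "a \<le> b" "b \<le> c + 1"
  shows "(\<Sum>i = a..c. F i) = (\<Sum>i = a..b - 1. F i) + (\<Sum>i = b..c. F i)"
proof -
  have "{a..c} = {a..b-1} \<union> {b..c}" using assms by auto
  moreover have "{a..b-1} \<inter> {b..c} = {}" by auto
  ultimately show ?thesis by (simp add: sum.union_disjoint)
qed

lemma part_sum:
  fixes F :: "int \<Rightarrow> real"
  assumes m: "mesh N K idx"
  shows "(\<Sum>k = 1..K. (\<Sum>i = idx k..idx (k+1) - 1. F i)) = (\<Sum>i = 1..int N. F i)"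
proof -
  have K1: "K \<ge> 1" "idx 1 = 1" "idx (K+1) = int N + 1" using m unfolding mesh_def by auto
  have "n \<le> K \<Longrightarrow> (\<Sum>k = 1..n. (\<Sum>i = idx k..idx (k+1) - 1. F i)) = (\<Sum>i = 1..idx (n+1) - 1. F i)" for n
  proof (induction n)
    case 0 then show ?case using K1 by simp
  next
    case (Suc n)
    have a: "1 \<le> idx (n+1)" using mesh_mono[OF m, of 1 "n+1"] K1 Suc.prems by simp
    have b: "idx (n+1) \<le> idx (Suc n + 1)" using mesh_mono[OF m, of "n+1" "Suc n+1"] Suc.prems by simp
    have "(\<Sum>k = 1..Suc n. (\<Sum>i = idx k..idx (k+1) - 1. F i))
        = (\<Sum>k = 1..n. (\<Sum>i = idx k..idx (k+1) - 1. F i)) + (\<Sum>i = idx (Suc n)..idx (Suc n+1) - 1. F i)"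
      by simp
    also have "\<dots> = (\<Sum>i = 1..idx (n+1) - 1. F i) + (\<Sum>i = idx (n+1)..idx (Suc n+1) - 1. F i)"
      using Suc by simp
    also have "\<dots> = (\<Sum>i = 1..idx (Suc n+1) - 1. F i)"
      using int_split_sum[of 1 "idx (n+1)" "idx (Suc n+1) - 1" F] a b by simp
    finally show ?case .
  qed
  from this[of K] show ?thesis using K1 by simp
qed

lemma UH_step:
  assumes u: "UH_per N K idx u" and m: "mesh N K idx" and k: "k \<in> {1..K}" and i: "idx k \<le> i" "i < idx (k+1)"
  shows "u (i+1) - u i = slope idx u k"
proof -
  obtain a b where ab: "\<And>i. idx k \<le> i \<and> i \<le> idx (k+1) \<Longrightarrow> u i = a + b * real_of_int i"
    using u k unfolding UH_per_def by blast
  have lt: "idx k < idx (k+1)" using m k unfolding mesh_def by auto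
  have "slope idx u k = (b * real_of_int (idx (k+1)) - b * real_of_int (idx k)) / real_of_int (idx (k+1) - idx k)"
    unfolding slope_def using ab[of "idx k"] ab[of "idx (k+1)"] lt by simp
  also have "\<dots> = b" using lt by (simp add: right_diff_distrib[symmetric])
  finally have s: "slope idx u k = b" .
  show ?thesis using ab[of i] ab[of "i+1"] i s by (simp add: algebra_simps)
qed


lemma innerX_sq_nonneg: "0 \<le> innerX N g g"
  unfolding innerX_def by (intro divide_nonneg_nonneg sum_nonneg) auto

lemma H1s_sq: "N > 0 \<Longrightarrow> (H1s N \<epsilon> w)^2 = (\<Sum>i = 1..int N. (Dd \<epsilon> w i)^2) / real N"
proof -
  have "(H1s N \<epsilon> w)^2 = innerX N (Dd \<epsilon> w) (Dd \<epsilon> w)"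
    unfolding H1s_def L2n_def by (rule real_sqrt_pow2[OF innerX_sq_nonneg])
  then show ?thesis unfolding innerX_def by (simp add: power2_eq_square)
qed

lemma H1s_nonneg: "H1s N \<epsilon> w \<ge> 0" unfolding H1s_def L2n_def using innerX_sq_nonneg by simp

lemma Dd_pt:
  assumes N: "N > 0" and j: "j \<in> {1..int N}"
  shows "\<bar>Dd \<epsilon> w j\<bar> \<le> sqrt (real N) * H1s N \<epsilon> w"
proof -
  have "(Dd \<epsilon> w j)^2 \<le> (\<Sum>i = 1..int N. (Dd \<epsilon> w i)^2)"
    by (rule member_le_sum) (use j in auto)
  also have "\<dots> = real N * (H1s N \<epsilon> w)^2" using H1s_sq[OF N, of \<epsilon> w] N by simp
  finally have "sqrt ((Dd \<epsilon> w j)^2) \<le> sqrt (real N * (H1s N \<epsilon> w)^2)" by (rule real_sqrt_le_mono)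
  then show ?thesis using H1s_nonneg[of N \<epsilon> w] by (simp add: real_sqrt_mult)
qed

lemma w_bound:
  assumes N: "N > 0" and eps: "0 < \<epsilon>" and Ne: "real N * \<epsilon> = 1"
    and w: "per N w" "avgX N w = 0"
  shows "\<bar>w i\<bar> \<le> sqrt (real N) * H1s N \<epsilon> w"
proof -
  have sw: "(\<Sum>j = 1..int N. w j) = 0" using w(2) N unfolding avgX_def by simp
  have st: "\<bar>w (j+1) - w j\<bar> \<le> \<epsilon> * (sqrt (real N) * H1s N \<epsilon> w)" if "j \<in> {1..int N}" for j
  proof -
    have "w (j+1) - w j = \<epsilon> * Dd \<epsilon> w j" unfolding Dd_def using eps by simp
    then show ?thesis using Dd_pt[OF N that, of \<epsilon> w] eps by (simp add: abs_mult)
  qed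
  have "\<bar>w i\<bar> \<le> real N * (\<epsilon> * (sqrt (real N) * H1s N \<epsilon> w))"
    using meanzero_bound[OF w(1) N sw step_all[OF w(1) N st]] .
  also have "\<dots> = sqrt (real N) * H1s N \<epsilon> w" using Ne by (simp add: algebra_simps)
  finally show ?thesis .
qed

lemma inner_bound:
  assumes N: "N > 0" and eps: "0 < \<epsilon>" and Ne: "real N * \<epsilon> = 1"
    and w: "per N w" "avgX N w = 0"
  shows "innerX N f w \<le> ((\<Sum>i = 1..int N. \<bar>f i\<bar>) * sqrt (real N) / real N) * H1s N \<epsilon> w"
proof -
  have "(\<Sum>i = 1..int N. f i * w i) \<le> (\<Sum>i = 1..int N. \<bar>f i\<bar> * (sqrt (real N) * H1s N \<epsilon> w))"
  proof (rule sum_mono)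
    fix i
    have "f i * w i \<le> \<bar>f i\<bar> * \<bar>w i\<bar>" by (simp add: abs_mult[symmetric])
    also have "\<dots> \<le> \<bar>f i\<bar> * (sqrt (real N) * H1s N \<epsilon> w)"
      using w_bound[OF N eps Ne w, of i] by (simp add: mult_left_mono)
    finally show "f i * w i \<le> \<bar>f i\<bar> * (sqrt (real N) * H1s N \<epsilon> w)" .
  qed
  then show ?thesis unfolding innerX_def using N
    by (simp add: sum_distrib_right[symmetric] divide_right_mono algebra_simps)
qed

lemma Hm1_props:
  assumes N: "N > 0" and eps: "0 < \<epsilon>" and Ne: "real N * \<epsilon> = 1"
    and u: "per N u" "avgX N u = 0"
  shows "innerX N f u \<le> Hm1 N \<epsilon> f * H1s N \<epsilon> u" "0 \<le> Hm1 N \<epsilon> f"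
proof -
  define B where "B = (\<Sum>i = 1..int N. \<bar>f i\<bar>) * sqrt (real N) / real N"
  have B0: "B \<ge> 0" unfolding B_def by (simp add: sum_nonneg)
  let ?S = "{innerX N f w / H1s N \<epsilon> w | w. per N w \<and> avgX N w = 0 \<and> w \<noteq> (\<lambda>_. 0)}"
  have bd: "x \<le> B" if "x \<in> insert 0 ?S" for x
  proof -
    { fix w assume w: "per N w" "avgX N w = 0"
      have "innerX N f w / H1s N \<epsilon> w \<le> B"
      proof (cases "H1s N \<epsilon> w = 0")
        case True then show ?thesis using B0 by simp
      next
        case False
        then have "H1s N \<epsilon> w > 0" using H1s_nonneg[of N \<epsilon> w] by simp
        then show ?thesis using inner_bound[OF N eps Ne w, of f] unfolding B_def
          by (simp add: pos_divide_le_eq)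
      qed }
    then show ?thesis using that B0 by auto
  qed
  have bdd: "bdd_above (insert 0 ?S)" unfolding bdd_above_def using bd by blast
  have ub: "x \<le> Hm1 N \<epsilon> f" if "x \<in> insert 0 ?S" for x
    unfolding Hm1_def by (rule cSup_upper[OF that bdd])
  show "0 \<le> Hm1 N \<epsilon> f" using ub by blast
  show "innerX N f u \<le> Hm1 N \<epsilon> f * H1s N \<epsilon> u"
  proof (cases "H1s N \<epsilon> u = 0")
    case True
    then show ?thesis using inner_bound[OF N eps Ne u, of f] by simp
  next
    case False
    then have pos: "H1s N \<epsilon> u > 0" using H1s_nonneg[of N \<epsilon> u] by simp
    have "u \<noteq> (\<lambda>_. 0)"
    proof
      assume "u = (\<lambda>_. 0)"
      then have "H1s N \<epsilon> u = 0" unfolding H1s_def L2n_def innerX_def Dd_def by simp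
      then show False using False by simp
    qed
    then have "innerX N f u / H1s N \<epsilon> u \<in> insert 0 ?S" using u by blast
    then have "innerX N f u / H1s N \<epsilon> u \<le> Hm1 N \<epsilon> f" by (rule ub)
    then show ?thesis using pos by (simp add: pos_divide_le_eq)
  qed
qed


lemma coerc:
  assumes cs: "cell_sol N p \<psi> \<chi>" and p: "0 < p"
    and bnd: "\<forall>i j. c \<le> \<psi> i j \<and> \<psi> i j \<le> C" and c: "0 < c" and eps: "0 < \<epsilon>"
    and N: "0 < N" and Ne: "real N * \<epsilon> = 1"
    and m: "mesh N K idx" and u: "UH_per N K idx u"
  shows "c^2 / C * (H1s N \<epsilon> u)^2 \<le> aHQC \<epsilon> p K \<psi> idx rep coll u u"
proof -
  have Cp: "C > 0" using bnd c by (meson less_le_trans order_trans)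
  have seg: "innerRep p (rep k) (\<lambda>i. \<psi> (coll k) i * Dd \<epsilon> (Rk \<epsilon> p \<psi> idx rep coll u k) i)
                         (Dd \<epsilon> (Rk \<epsilon> p \<psi> idx rep coll u k)) \<ge> (slope idx u k / \<epsilon>)^2 * (c^2 / C)" for k
  proof -
    let ?s = "slope idx u k / \<epsilon>" and ?q = "qq \<psi> \<chi> (coll k)"
    have tm: "\<psi> (coll k) i * Dd \<epsilon> (Rk \<epsilon> p \<psi> idx rep coll u k) i * Dd \<epsilon> (Rk \<epsilon> p \<psi> idx rep coll u k) i
        \<ge> ?s^2 * (c^2 / C)" for i
    proof -
      have a: "\<psi> (coll k) i * Dd \<epsilon> (Rk \<epsilon> p \<psi> idx rep coll u k) i = ?s * ?q"
        using DRk[OF cs p bnd c eps] by simp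
      have ap: "\<psi> (coll k) i > 0" "\<psi> (coll k) i \<le> C" using bnd c by (auto intro: less_le_trans)
      have D: "Dd \<epsilon> (Rk \<epsilon> p \<psi> idx rep coll u k) i = ?s * ?q / \<psi> (coll k) i"
      proof -
        have "Dd \<epsilon> (Rk \<epsilon> p \<psi> idx rep coll u k) i = (\<psi> (coll k) i * Dd \<epsilon> (Rk \<epsilon> p \<psi> idx rep coll u k) i) / \<psi> (coll k) i"
          using ap(1) by simp
        also have "\<dots> = ?s * ?q / \<psi> (coll k) i" unfolding a ..
        finally show ?thesis .
      qed
      have qb: "c \<le> ?q" using cell_qq(2)[OF cs p bnd c] .
      have "?s^2 * (c^2 / C) \<le> ?s^2 * (?q^2 / \<psi> (coll k) i)"
      proof (rule mult_left_mono)
        have "c^2 \<le> ?q^2" using qb c by (simp add: power_mono)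
        then show "c^2 / C \<le> ?q^2 / \<psi> (coll k) i" using ap c by (meson frac_le zero_le_power2 less_imp_le)
      qed simp
      also have "\<dots> = \<psi> (coll k) i * Dd \<epsilon> (Rk \<epsilon> p \<psi> idx rep coll u k) i * Dd \<epsilon> (Rk \<epsilon> p \<psi> idx rep coll u k) i"
        unfolding a D using ap by (simp add: field_simps power2_eq_square)
      finally show ?thesis .
    qed
    have "(\<Sum>i = rep k..rep k + int p - 1. ?s^2 * (c^2 / C)) \<le>
       (\<Sum>i = rep k..rep k + int p - 1. \<psi> (coll k) i * Dd \<epsilon> (Rk \<epsilon> p \<psi> idx rep coll u k) i * Dd \<epsilon> (Rk \<epsilon> p \<psi> idx rep coll u k) i)"
      by (rule sum_mono) (rule tm)
    moreover have "(\<Sum>i = rep k..rep k + int p - 1. ?s^2 * (c^2 / C)) = real p * (?s^2 * (c^2 / C))" by simp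
    ultimately show ?thesis unfolding innerRep_def using p by (simp add: field_simps)
  qed
  have Hk0: "Hk \<epsilon> idx k \<ge> 0" if "k \<in> {1..K}" for k
    using m that eps unfolding mesh_def Hk_def by (auto intro!: mult_nonneg_nonneg less_imp_le)
  have "aHQC \<epsilon> p K \<psi> idx rep coll u u \<ge> (\<Sum>k = 1..K. Hk \<epsilon> idx k * ((slope idx u k / \<epsilon>)^2 * (c^2 / C)))"
    unfolding aHQC_def by (rule sum_mono) (rule mult_left_mono[OF seg Hk0])
  moreover have "(\<Sum>k = 1..K. Hk \<epsilon> idx k * ((slope idx u k / \<epsilon>)^2 * (c^2 / C))) = (c^2 / C) * (H1s N \<epsilon> u)^2"
  proof -
    have that: "Hk \<epsilon> idx k * (slope idx u k / \<epsilon>)^2 = \<epsilon> * (\<Sum>i = idx k..idx (k+1) - 1. (Dd \<epsilon> u i)^2)" if k: "k \<in> {1..K}" for k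
    proof -
      have "(\<Sum>i = idx k..idx (k+1) - 1. (Dd \<epsilon> u i)^2) = (\<Sum>i = idx k..idx (k+1) - 1. (slope idx u k / \<epsilon>)^2)"
      proof (rule sum.cong[OF refl])
        fix i assume "i \<in> {idx k..idx (k+1) - 1}"
        then show "(Dd \<epsilon> u i)^2 = (slope idx u k / \<epsilon>)^2"
          using UH_step[OF u m k, of i] unfolding Dd_def by simp
      qed
      also have "\<dots> = real_of_int (idx (k+1) - idx k) * (slope idx u k / \<epsilon>)^2"
      proof -
        have "idx k < idx (k+1)" using m k unfolding mesh_def by auto
        then have "real (nat (idx (k+1) - idx k)) = real_of_int (idx (k+1) - idx k)" by (simp add: of_nat_nat)
        then show ?thesis by simp
      qed
      finally show ?thesis unfolding Hk_def by simp
    qed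
    have "(\<Sum>k = 1..K. Hk \<epsilon> idx k * ((slope idx u k / \<epsilon>)^2 * (c^2 / C)))
       = (c^2 / C) * (\<epsilon> * (\<Sum>k = 1..K. (\<Sum>i = idx k..idx (k+1) - 1. (Dd \<epsilon> u i)^2)))"
    proof -
      have "(\<Sum>k = 1..K. Hk \<epsilon> idx k * ((slope idx u k / \<epsilon>)^2 * (c^2 / C)))
          = (\<Sum>k = 1..K. (c^2 / C) * (Hk \<epsilon> idx k * (slope idx u k / \<epsilon>)^2))"
        by (rule sum.cong[OF refl]) (simp only: mult_ac)
      also have "\<dots> = (c^2 / C) * (\<Sum>k = 1..K. Hk \<epsilon> idx k * (slope idx u k / \<epsilon>)^2)"
        by (simp only: sum_distrib_left)
      also have "(\<Sum>k = 1..K. Hk \<epsilon> idx k * (slope idx u k / \<epsilon>)^2)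
          = (\<Sum>k = 1..K. \<epsilon> * (\<Sum>i = idx k..idx (k+1) - 1. (Dd \<epsilon> u i)^2))"
        by (rule sum.cong[OF refl]) (rule that)
      also have "\<dots> = \<epsilon> * (\<Sum>k = 1..K. (\<Sum>i = idx k..idx (k+1) - 1. (Dd \<epsilon> u i)^2))"
        by (simp only: sum_distrib_left)
      finally show ?thesis .
    qed
    also have "\<dots> = (c^2 / C) * (\<epsilon> * (\<Sum>i = 1..int N. (Dd \<epsilon> u i)^2))" using part_sum[OF m] by simp
    also have "\<dots> = (c^2 / C) * (H1s N \<epsilon> u)^2"
    proof -
      have "\<epsilon> = 1 / real N" using Ne N by (simp add: field_simps)
      then show ?thesis using H1s_sq[OF N, of \<epsilon> u] by simp
    qed
    finally show ?thesis .
  qed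
  ultimately show ?thesis by simp
qed


lemma shift_sum:
  fixes F :: "int \<Rightarrow> real"
  assumes "per N F"
  shows "(\<Sum>i = 1..int N. F (i+1)) = (\<Sum>i = 1..int N. F i)"
proof -
  have "(\<Sum>i = 1..int N. (F (i+1) - F i)) = F (1 + int N) - F 1" using tele_sum[of F 1 N] by simp
  also have "\<dots> = 0" using assms unfolding per_def by (metis add.commute diff_self)
  finally show ?thesis by (simp add: sum_subtractf)
qed

lemma L2n_sq: "N > 0 \<Longrightarrow> (L2n N g)^2 = (\<Sum>i = 1..int N. (g i)^2) / real N"
proof -
  have "(L2n N g)^2 = innerX N g g" unfolding L2n_def by (rule real_sqrt_pow2[OF innerX_sq_nonneg])
  then show ?thesis unfolding innerX_def by (simp add: power2_eq_square)
qed

lemma L2n_nonneg: "L2n N g \<ge> 0" unfolding L2n_def using innerX_sq_nonneg by simp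

lemma L2n_le:
  assumes N: "N > 0" and b: "b \<ge> 0" and le: "(\<Sum>i = 1..int N. (d i)^2) \<le> b^2 * (\<Sum>i = 1..int N. (g i)^2)"
  shows "L2n N d \<le> b * L2n N g"
proof -
  have "(L2n N d)^2 \<le> (b * L2n N g)^2"
    unfolding power_mult_distrib L2n_sq[OF N] using le N by (simp add: divide_right_mono)
  then show ?thesis using L2n_nonneg[of N g] b by (meson power2_le_imp_le mult_nonneg_nonneg)
qed

lemma norms_from_pt:
  assumes N: "N > 0" and eps: "0 < \<epsilon>"
    and pd: "per N d" and pg: "per N g" and pt: "\<And>i. \<bar>d i\<bar> \<le> \<epsilon> * M * \<bar>g i\<bar>" and M: "M \<ge> 0"
  shows "H1s N \<epsilon> d \<le> 2 * M * L2n N g" "L2n N d \<le> \<epsilon> * M * L2n N g"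
proof -
  show "L2n N d \<le> \<epsilon> * M * L2n N g"
  proof (rule L2n_le[OF N])
    show "0 \<le> \<epsilon> * M" using eps M by simp
    have "(d i)^2 \<le> (\<epsilon> * M)^2 * (g i)^2" for i
    proof -
      have "\<bar>d i\<bar> \<le> \<bar>\<epsilon> * M * g i\<bar>" using pt[of i] eps M by (simp add: abs_mult)
      then have "(d i)^2 \<le> (\<epsilon> * M * g i)^2" by (simp add: abs_le_square_iff)
      then show ?thesis by (simp add: power_mult_distrib)
    qed
    then show "(\<Sum>i = 1..int N. (d i)^2) \<le> (\<epsilon> * M)^2 * (\<Sum>i = 1..int N. (g i)^2)"
      by (simp add: sum_distrib_left sum_mono)
  qed
  show "H1s N \<epsilon> d \<le> 2 * M * L2n N g" unfolding H1s_def
  proof (rule L2n_le[OF N])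
    show "0 \<le> 2 * M" using M by simp
    have each: "(Dd \<epsilon> d i)^2 \<le> 2 * M^2 * ((g (i+1))^2 + (g i)^2)" for i
    proof -
      have "\<bar>Dd \<epsilon> d i\<bar> \<le> (\<bar>d (i+1)\<bar> + \<bar>d i\<bar>) / \<epsilon>" unfolding Dd_def using eps
        by (simp add: abs_div divide_right_mono abs_triangle_ineq4)
      also have "\<dots> \<le> (\<epsilon> * M * \<bar>g (i+1)\<bar> + \<epsilon> * M * \<bar>g i\<bar>) / \<epsilon>"
        using pt[of i] pt[of "i+1"] eps by (simp add: divide_right_mono)
      also have "\<dots> = M * (\<bar>g (i+1)\<bar> + \<bar>g i\<bar>)" using eps by (simp add: field_simps)
      finally have a: "\<bar>Dd \<epsilon> d i\<bar> \<le> M * (\<bar>g (i+1)\<bar> + \<bar>g i\<bar>)" .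
      have "(Dd \<epsilon> d i)^2 \<le> (M * (\<bar>g (i+1)\<bar> + \<bar>g i\<bar>))^2"
        using a by (meson abs_ge_zero order_trans power2_le_iff_abs_le abs_le_square_iff)
      also have "\<dots> = M^2 * (\<bar>g (i+1)\<bar> + \<bar>g i\<bar>)^2" by (simp add: power_mult_distrib)
      also have "\<dots> \<le> M^2 * (2 * ((g (i+1))^2 + (g i)^2))"
      proof (rule mult_left_mono)
        have "(\<bar>g (i+1)\<bar> + \<bar>g i\<bar>)^2 + (\<bar>g (i+1)\<bar> - \<bar>g i\<bar>)^2 = 2 * ((g (i+1))^2 + (g i)^2)"
          by (simp add: power2_eq_square algebra_simps)
        moreover have "(\<bar>g (i+1)\<bar> - \<bar>g i\<bar>)^2 \<ge> 0" by simp
        ultimately show "(\<bar>g (i+1)\<bar> + \<bar>g i\<bar>)^2 \<le> 2 * ((g (i+1))^2 + (g i)^2)" by linarith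
      qed simp
      also have "\<dots> = 2 * M^2 * ((g (i+1))^2 + (g i)^2)" by (simp only: mult_ac)
      finally show ?thesis .
    qed
    have "(\<Sum>i = 1..int N. (Dd \<epsilon> d i)^2) \<le> (\<Sum>i = 1..int N. 2 * M^2 * ((g (i+1))^2 + (g i)^2))"
      by (rule sum_mono) (rule each)
    also have "\<dots> = 2 * M^2 * ((\<Sum>i = 1..int N. (g (i+1))^2) + (\<Sum>i = 1..int N. (g i)^2))"
      by (simp only: sum_distrib_left[symmetric] sum.distrib)
    also have "(\<Sum>i = 1..int N. (g (i+1))^2) = (\<Sum>i = 1..int N. (g i)^2)"
      using shift_sum[of N "\<lambda>i. (g i)^2"] pg unfolding per_def by simp
    finally show "(\<Sum>i = 1..int N. (Dd \<epsilon> d i)^2) \<le> (2 * M)^2 * (\<Sum>i = 1..int N. (g i)^2)"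
      by (simp add: power_mult_distrib)
  qed
qed


lemma Hmax_ge: "k \<in> {1..K} \<Longrightarrow> Hk \<epsilon> idx k \<le> Hmax \<epsilon> K idx"
  unfolding Hmax_def by (rule Max_ge) auto

lemma pt_bound:
  assumes cs: "cell_sol N p \<psi> \<chi>" and p: "0 < p" and N: "0 < N"
    and bnd: "\<forall>i j. c \<le> \<psi> i j \<and> \<psi> i j \<le> C" and c: "0 < c" and eps: "0 < \<epsilon>"
    and ts: "two_scale N p \<psi>" and L: "Linf N p (DX \<epsilon> \<psi>) \<le> C'"
    and m: "mesh N K idx" and sa: "sampling p K idx rep coll" and u: "UH_per N K idx u"
    and i: "1 \<le> i" "i \<le> int N"
  shows "\<bar>uhat \<epsilon> \<chi> u i - recon N \<epsilon> p K \<psi> idx rep coll u i\<bar>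
     \<le> \<epsilon> * (real p * ((C^2 / c^3 + C / c^2) * C') * Hmax \<epsilon> K idx) * \<bar>Dd \<epsilon> u i\<bar>"
proof -
  define B where "B = C^2 / c^3 + C / c^2"
  have Cp: "C \<ge> 0" using bnd c by (meson less_le_trans order_trans less_imp_le)
  have B0: "B \<ge> 0" unfolding B_def using Cp c by (intro add_nonneg_nonneg divide_nonneg_pos) auto
  have C'0: "C' \<ge> 0" using Linf_ge[of 1 N 1 p "DX \<epsilon> \<psi>"] N p L by simp
  obtain k where k: "k \<in> {1..K}" "idx k \<le> i" "i < idx (k+1)" using seg_exists[OF m i] by blast
  have red: "(i - 1) mod int N + 1 = i" using i by simp
  have sum1: "(\<Sum>k' = 1..K. if idx k' \<le> i \<and> i < idx (k' + 1) then corr \<epsilon> p \<psi> idx rep coll u k' i else 0)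
      = corr \<epsilon> p \<psi> idx rep coll u k i"
  proof -
    have "(\<Sum>k' = 1..K. if idx k' \<le> i \<and> i < idx (k' + 1) then corr \<epsilon> p \<psi> idx rep coll u k' i else 0)
        = (\<Sum>k' = 1..K. if k' = k then corr \<epsilon> p \<psi> idx rep coll u k' i else 0)"
    proof (rule sum.cong[OF refl])
      fix k' assume k': "k' \<in> {1..K}"
      have "(idx k' \<le> i \<and> i < idx (k' + 1)) = (k' = k)"
        using seg_unique[OF m k(1) k(2) k(3) k'] k by auto
      then show "(if idx k' \<le> i \<and> i < idx (k' + 1) then corr \<epsilon> p \<psi> idx rep coll u k' i else 0)
          = (if k' = k then corr \<epsilon> p \<psi> idx rep coll u k' i else 0)" by simp
    qed
    also have "\<dots> = corr \<epsilon> p \<psi> idx rep coll u k i" using k(1) by (simp add: sum.delta)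
    finally show ?thesis .
  qed
  have rec: "recon N \<epsilon> p K \<psi> idx rep coll u i = u i + slope idx u k * \<chi> (coll k) i"
  proof -
    have "recon N \<epsilon> p K \<psi> idx rep coll u i = u i + corr \<epsilon> p \<psi> idx rep coll u k i"
      unfolding recon_def Let_def red sum1 ..
    then show ?thesis using corr_eq[OF cs p bnd c eps] by simp
  qed
  have Dd: "Dd \<epsilon> u i = slope idx u k / \<epsilon>" unfolding Dd_def using UH_step[OF u m k] by simp
  have diff: "uhat \<epsilon> \<chi> u i - recon N \<epsilon> p K \<psi> idx rep coll u i = \<epsilon> * Dd \<epsilon> u i * (\<chi> i i - \<chi> (coll k) i)"
    unfolding rec uhat_def using Dd eps by (simp add: algebra_simps)
  have sak: "idx k \<le> rep k" "rep k \<le> coll k" "coll k < rep k + int p" "rep k + int p \<le> idx (k+1)"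
    using sa k(1) unfolding sampling_def by auto
  have dist: "\<epsilon> * \<bar>real_of_int (i - coll k)\<bar> \<le> Hmax \<epsilon> K idx"
  proof -
    have "\<bar>real_of_int (i - coll k)\<bar> \<le> real_of_int (idx (k+1) - idx k)" using sak k by linarith
    then have "\<epsilon> * \<bar>real_of_int (i - coll k)\<bar> \<le> Hk \<epsilon> idx k" unfolding Hk_def using eps by simp
    then show ?thesis by (rule order_trans[OF _ Hmax_ge[OF k(1)]])
  qed
  have chi: "\<bar>\<chi> i i - \<chi> (coll k) i\<bar> \<le> real p * (B * (C' * \<epsilon> * \<bar>real_of_int (i - coll k)\<bar>))"
    unfolding B_def by (rule chi_row[OF cs p bnd c psi_lip[OF ts N p eps L]])
  also have "\<dots> \<le> real p * (B * (C' * Hmax \<epsilon> K idx))"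
    using dist B0 C'0 by (simp add: mult_left_mono mult.assoc)
  finally have chi2: "\<bar>\<chi> i i - \<chi> (coll k) i\<bar> \<le> real p * (B * C') * Hmax \<epsilon> K idx" by (simp add: mult_ac)
  have "\<bar>uhat \<epsilon> \<chi> u i - recon N \<epsilon> p K \<psi> idx rep coll u i\<bar> = \<epsilon> * \<bar>Dd \<epsilon> u i\<bar> * \<bar>\<chi> i i - \<chi> (coll k) i\<bar>"
    unfolding diff using eps by (simp add: abs_mult)
  also have "\<dots> \<le> \<epsilon> * \<bar>Dd \<epsilon> u i\<bar> * (real p * (B * C') * Hmax \<epsilon> K idx)"
    using chi2 eps by (simp add: mult_left_mono)
  finally show ?thesis unfolding B_def by (simp add: mult_ac)
qed


lemma per_Dd: "per N u \<Longrightarrow> per N (Dd \<epsilon> u)"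
  unfolding per_def Dd_def
proof
  fix i assume a: "\<forall>i. u (i + int N) = u i"
  have "u (i + int N + 1) = u ((i + 1) + int N)" by (simp add: ac_simps)
  then show "(u (i + int N + 1) - u (i + int N)) / \<epsilon> = (u (i + 1) - u i) / \<epsilon>" using a by simp
qed

lemma per_diff:
  assumes cs: "cell_sol N p \<psi> \<chi>" and p: "0 < p" and pN: "p dvd N" and u: "per N u"
  shows "per N (\<lambda>i. uhat \<epsilon> \<chi> u i - recon N \<epsilon> p K \<psi> idx rep coll u i)"
  unfolding per_def
proof
  fix i
  have ts: "two_scale N p \<chi>" using cs unfolding cell_sol_def by auto
  obtain t where t: "N = p * t" using pN by (auto elim: dvdE)
  have pc: "per p (\<chi> i)" using ts unfolding two_scale_def per_def by simp
  have "\<chi> (i + int N) (i + int N) = \<chi> i (i + int N)" using ts unfolding two_scale_def by simp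
  also have "\<dots> = \<chi> i i" using per_int[OF pc, of i "int t"] t by simp
  finally have c1: "\<chi> (i + int N) (i + int N) = \<chi> i i" .
  have uh: "uhat \<epsilon> \<chi> u (i + int N) = uhat \<epsilon> \<chi> u i"
    unfolding uhat_def c1 using u per_Dd[OF u, of \<epsilon>] unfolding per_def by simp
  have "(i + int N - 1) mod int N = (i - 1) mod int N"
  proof -
    have e: "i + int N - 1 = (i - 1) + int N" by simp
    show ?thesis unfolding e by (rule mod_add_self2)
  qed
  then have rc: "recon N \<epsilon> p K \<psi> idx rep coll u (i + int N) = recon N \<epsilon> p K \<psi> idx rep coll u i"
    unfolding recon_def by simp
  show "uhat \<epsilon> \<chi> u (i + int N) - recon N \<epsilon> p K \<psi> idx rep coll u (i + int N)
      = uhat \<epsilon> \<chi> u i - recon N \<epsilon> p K \<psi> idx rep coll u i" using uh rc by simp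
qed

theorem lemma6p10:
  fixes c\<psi> C\<psi> C'\<psi> :: real and p :: nat
  shows "\<exists>C13 C14 :: real. \<forall>(N::nat) (\<epsilon>::real) \<psi> \<chi> f K idx rep coll uH.
     0 < \<epsilon> \<and> 0 < N \<and> 0 < p \<and> p dvd N \<and> real N * \<epsilon> = 1
     \<and> two_scale N p \<psi> \<and> 0 < c\<psi> \<and> (\<forall>i j. c\<psi> \<le> \<psi> i j \<and> \<psi> i j \<le> C\<psi>)
     \<and> Linf N p (DX \<epsilon> \<psi>) \<le> C'\<psi>
     \<and> cell_sol N p \<psi> \<chi>
     \<and> per N f \<and> avgX N f = 0
     \<and> mesh N K idx \<and> sampling p K idx rep coll
     \<and> HQC_sol N \<epsilon> p K \<psi> idx rep coll f uH
     \<longrightarrow>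
       H1s N \<epsilon> (\<lambda>i. uhat \<epsilon> \<chi> uH i - recon N \<epsilon> p K \<psi> idx rep coll uH i)
         \<le> C13 * Hmax \<epsilon> K idx * Hm1 N \<epsilon> f
     \<and> L2n N (\<lambda>i. uhat \<epsilon> \<chi> uH i - recon N \<epsilon> p K \<psi> idx rep coll uH i)
         \<le> C14 * \<epsilon> * Hmax \<epsilon> K idx * Hm1 N \<epsilon> f"
proof -
  define A where "A = real p * ((C\<psi>^2 / c\<psi>^3 + C\<psi> / c\<psi>^2) * C'\<psi>)"
  define \<kappa> where "\<kappa> = c\<psi>^2 / C\<psi>"
  show ?thesis
  proof (intro exI allI impI)
    fix N :: nat and \<epsilon> :: real and \<psi> \<chi> :: "int \<Rightarrow> int \<Rightarrow> real" and f :: "int \<Rightarrow> real"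
      and K :: nat and idx rep coll :: "nat \<Rightarrow> int" and uH :: "int \<Rightarrow> real"
    assume H: "0 < \<epsilon> \<and> 0 < N \<and> 0 < p \<and> p dvd N \<and> real N * \<epsilon> = 1
     \<and> two_scale N p \<psi> \<and> 0 < c\<psi> \<and> (\<forall>i j. c\<psi> \<le> \<psi> i j \<and> \<psi> i j \<le> C\<psi>)
     \<and> Linf N p (DX \<epsilon> \<psi>) \<le> C'\<psi>
     \<and> cell_sol N p \<psi> \<chi>
     \<and> per N f \<and> avgX N f = 0
     \<and> mesh N K idx \<and> sampling p K idx rep coll
     \<and> HQC_sol N \<epsilon> p K \<psi> idx rep coll f uH"
    then have eps: "0 < \<epsilon>" and N: "0 < N" and p: "0 < p" and pN: "p dvd N" and Ne: "real N * \<epsilon> = 1"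
      and ts: "two_scale N p \<psi>" and c: "0 < c\<psi>" and bnd: "\<forall>i j. c\<psi> \<le> \<psi> i j \<and> \<psi> i j \<le> C\<psi>"
      and L: "Linf N p (DX \<epsilon> \<psi>) \<le> C'\<psi>" and cs: "cell_sol N p \<psi> \<chi>"
      and m: "mesh N K idx" and sa: "sampling p K idx rep coll"
      and hq: "HQC_sol N \<epsilon> p K \<psi> idx rep coll f uH" by auto
    have us: "UH_sharp N K idx uH" and aeq: "aHQC \<epsilon> p K \<psi> idx rep coll uH uH = innerX N f uH"
      using hq unfolding HQC_sol_def by auto
    have uper: "UH_per N K idx uH" and pu: "per N uH" and au: "avgX N uH = 0"
      using us unfolding UH_sharp_def UH_per_def by auto
    have Cp: "C\<psi> > 0" using bnd c by (meson less_le_trans order_trans)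
    have kp: "\<kappa> > 0" unfolding \<kappa>_def using c Cp by simp
    have C'0: "C'\<psi> \<ge> 0" using Linf_ge[of 1 N 1 p "DX \<epsilon> \<psi>"] N p L by simp
    have A0: "A \<ge> 0" unfolding A_def using C'0 Cp c
      by (intro mult_nonneg_nonneg add_nonneg_nonneg divide_nonneg_pos) auto
    have Hm0: "Hmax \<epsilon> K idx \<ge> 0"
    proof -
      have "1 \<in> {1..K}" using m unfolding mesh_def by auto
      moreover have "Hk \<epsilon> idx 1 \<ge> 0"
      proof -
        have "\<forall>k\<in>{1..K}. idx k < idx (k + 1)" "K \<ge> 1" using m unfolding mesh_def by auto
        then have "idx 1 < idx (1+1)" by auto
        then show ?thesis unfolding Hk_def using eps by simp
      qed
      ultimately show ?thesis using Hmax_ge by (meson order_trans)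
    qed
    define h where "h = H1s N \<epsilon> uH"
    have h0: "h \<ge> 0" unfolding h_def by (rule H1s_nonneg)
    have "\<kappa> * h^2 \<le> Hm1 N \<epsilon> f * h"
      using coerc[OF cs p bnd c eps N Ne m uper, of rep coll] aeq Hm1_props(1)[OF N eps Ne pu au, of f]
      unfolding \<kappa>_def h_def by linarith
    then have hb: "h \<le> Hm1 N \<epsilon> f / \<kappa>"
    proof (cases "h = 0")
      case True then show ?thesis using Hm1_props(2)[OF N eps Ne pu au, of f] kp by simp
    next
      case False
      then have "h > 0" using h0 by simp
      moreover assume "\<kappa> * h^2 \<le> Hm1 N \<epsilon> f * h"
      ultimately have "\<kappa> * h \<le> Hm1 N \<epsilon> f" by (simp add: power2_eq_square)
      then show ?thesis using kp by (simp add: field_simps)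
    qed
    define d where "d = (\<lambda>i. uhat \<epsilon> \<chi> uH i - recon N \<epsilon> p K \<psi> idx rep coll uH i)"
    define M where "M = A * Hmax \<epsilon> K idx"
    have M0: "M \<ge> 0" unfolding M_def using A0 Hm0 by simp
    have pd: "per N d" unfolding d_def by (rule per_diff[OF cs p pN pu])
    have pg: "per N (Dd \<epsilon> uH)" by (rule per_Dd[OF pu])
    have pt1: "\<bar>d i\<bar> \<le> \<epsilon> * M * \<bar>Dd \<epsilon> uH i\<bar>" if "1 \<le> i" "i \<le> int N" for i
      using pt_bound[OF cs p N bnd c eps ts L m sa uper that] unfolding d_def M_def A_def .
    have pt: "\<bar>d i\<bar> \<le> \<epsilon> * M * \<bar>Dd \<epsilon> uH i\<bar>" for i
    proof -
      define j where "j = (i - 1) mod int N + 1"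
      have "d i = d j" "Dd \<epsilon> uH i = Dd \<epsilon> uH j" "1 \<le> j" "j \<le> int N"
        using per_red[OF pd N, of i] per_red[OF pg N, of i] unfolding j_def by auto
      then show ?thesis using pt1[of j] by simp
    qed
    note nb = norms_from_pt[OF N eps pd pg pt M0]
    have Lg: "L2n N (Dd \<epsilon> uH) = h" unfolding h_def H1s_def ..
    have "H1s N \<epsilon> d \<le> 2 * M * h" using nb(1) Lg by simp
    also have "\<dots> \<le> 2 * M * (Hm1 N \<epsilon> f / \<kappa>)" using hb M0 by (intro mult_left_mono) auto
    also have "\<dots> = (2 * A / \<kappa>) * Hmax \<epsilon> K idx * Hm1 N \<epsilon> f" unfolding M_def by simp
    finally have r1: "H1s N \<epsilon> d \<le> (2 * A / \<kappa>) * Hmax \<epsilon> K idx * Hm1 N \<epsilon> f" .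
    have "L2n N d \<le> \<epsilon> * M * h" using nb(2) Lg by simp
    also have "\<dots> \<le> \<epsilon> * M * (Hm1 N \<epsilon> f / \<kappa>)" using hb M0 eps by (intro mult_left_mono) auto
    also have "\<dots> = (A / \<kappa>) * \<epsilon> * Hmax \<epsilon> K idx * Hm1 N \<epsilon> f" unfolding M_def by simp
    finally have r2: "L2n N d \<le> (A / \<kappa>) * \<epsilon> * Hmax \<epsilon> K idx * Hm1 N \<epsilon> f" .
    show "H1s N \<epsilon> (\<lambda>i. uhat \<epsilon> \<chi> uH i - recon N \<epsilon> p K \<psi> idx rep coll uH i)
         \<le> (2 * A / \<kappa>) * Hmax \<epsilon> K idx * Hm1 N \<epsilon> f
     \<and> L2n N (\<lambda>i. uhat \<epsilon> \<chi> uH i - recon N \<epsilon> p K \<psi> idx rep coll uH i)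
         \<le> (A / \<kappa>) * \<epsilon> * Hmax \<epsilon> K idx * Hm1 N \<epsilon> f"
      using r1 r2 unfolding d_def by simp
  qed
qed

end
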